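(* Let $|\psi\rangle,|\phi\rangle,|e\rangle,|f\rangle$ be unit vectors in $\mathbb{C}^2$ and let $\mathcal{GE}$ be the set of entanglement breaking channels on $\mathcal{L}(\mathbb{C}^2)$. Then $$\max_{\Psi\in\mathcal{GE}}\left\{\frac12\langle e|\Psi(|\psi\rangle\langle\psi|)|e\rangle+\frac12\langle f|\Psi(|\phi\rangle\langle\phi|)|f\rangle\right\}\le\frac12\left(1+\sqrt{|\langle e|f\rangle|^2+\max\left\{|\langle\psi|\phi\rangle||\langle e|f\rangle|,\sqrt{(1-|\langle\psi|\phi\rangle|^2)(1-|\langle e|f\rangle|^2)}\right\}^2}\right).$$
   Context: A quantum channel (linear, completely positive, trace preserving map on $\mathcal{L}(\mathbb{C}^2)$) $\Psi$ is entanglement breaking if $(\mathrm{id}\otimes\Psi)(\rho)$ is separable for every density operator $\rho$ on $\mathbb{C}^2\otimes\mathbb{C}^2$. *)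

theory Defs
  imports "HOL-Analysis.Analysis" "HOL-Library.Numeral_Type"
begin

text \<open>Operators on C^2 are matrices complex^2^2; operators on C^2 (x) C^2 are
  matrices indexed by the product type 2 \<times> 2 (first component = first factor).\<close>

type_synonym qmat = "complex^2^2"

definition cinner :: "complex^'n::finite \<Rightarrow> complex^'n \<Rightarrow> complex" where
  "cinner u v = (\<Sum>i\<in>UNIV. cnj (u$i) * v$i)"

definition ctrace :: "complex^'n::finite^'n \<Rightarrow> complex" where
  "ctrace A = (\<Sum>i\<in>UNIV. A$i$i)"

definition cscale :: "complex \<Rightarrow> complex^'n::finite^'m::finite \<Rightarrow> complex^'n^'m" where
  "cscale c A = (\<chi> i j. c * A$i$j)"

definition psd :: "complex^'n::finite^'n \<Rightarrow> bool" where
  "psd A \<longleftrightarrow> (\<forall>v. cinner v (A *v v) \<in> \<real> \<and> 0 \<le> Re (cinner v (A *v v)))"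

definition density :: "complex^'n::finite^'n \<Rightarrow> bool" where
  "density A \<longleftrightarrow> psd A \<and> ctrace A = 1"

definition proj :: "complex^'n::finite \<Rightarrow> complex^'n^'n" where
  "proj v = (\<chi> i j. v$i * cnj (v$j))"

definition kron :: "complex^'a::finite^'a \<Rightarrow> complex^'b::finite^'b \<Rightarrow> complex^('a\<times>'b)^('a\<times>'b)" where
  "kron A B = (\<chi> r c. A$(fst r)$(fst c) * B$(snd r)$(snd c))"

text \<open>Positivity of an element of M_n(L(C^2)) = L(C^n (x) C^2), given as an n\<times>n block
  matrix with 2\<times>2 blocks M i j (i, j < n).\<close>
definition psd_block :: "nat \<Rightarrow> (nat \<Rightarrow> nat \<Rightarrow> qmat) \<Rightarrow> bool" where
  "psd_block n M \<longleftrightarrow> (\<forall>v :: nat \<Rightarrow> complex^2.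
      (\<Sum>i<n. \<Sum>j<n. cinner (v i) (M i j *v v j)) \<in> \<real> \<and>
      0 \<le> Re (\<Sum>i<n. \<Sum>j<n. cinner (v i) (M i j *v v j)))"

definition complex_linear :: "(qmat \<Rightarrow> qmat) \<Rightarrow> bool" where
  "complex_linear \<Psi> \<longleftrightarrow> (\<forall>A B. \<Psi> (A + B) = \<Psi> A + \<Psi> B) \<and> (\<forall>c A. \<Psi> (cscale c A) = cscale c (\<Psi> A))"

definition completely_positive :: "(qmat \<Rightarrow> qmat) \<Rightarrow> bool" where
  "completely_positive \<Psi> \<longleftrightarrow> (\<forall>n M. psd_block n M \<longrightarrow> psd_block n (\<lambda>i j. \<Psi> (M i j)))"

definition trace_preserving :: "(qmat \<Rightarrow> qmat) \<Rightarrow> bool" where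
  "trace_preserving \<Psi> \<longleftrightarrow> (\<forall>A. ctrace (\<Psi> A) = ctrace A)"

definition quantum_channel :: "(qmat \<Rightarrow> qmat) \<Rightarrow> bool" where
  "quantum_channel \<Psi> \<longleftrightarrow> complex_linear \<Psi> \<and> completely_positive \<Psi> \<and> trace_preserving \<Psi>"

text \<open>(id (x) \<Psi>) on L(C^2 (x) C^2): apply \<Psi> to each 2\<times>2 block.\<close>
definition id_tensor :: "(qmat \<Rightarrow> qmat) \<Rightarrow> complex^(2\<times>2)^(2\<times>2) \<Rightarrow> complex^(2\<times>2)^(2\<times>2)" where
  "id_tensor \<Psi> \<rho> = (\<chi> r c. \<Psi> (\<chi> j l. \<rho>$(fst r, j)$(fst c, l)) $ (snd r) $ (snd c))"

definition separable :: "complex^(2\<times>2)^(2\<times>2) \<Rightarrow> bool" where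
  "separable \<rho> \<longleftrightarrow> (\<exists>(K::nat) (p::nat \<Rightarrow> real) (a::nat \<Rightarrow> qmat) (b::nat \<Rightarrow> qmat).
      (\<forall>k<K. 0 \<le> p k \<and> density (a k) \<and> density (b k)) \<and> (\<Sum>k<K. p k) = 1 \<and>
      \<rho> = (\<Sum>k<K. cscale (complex_of_real (p k)) (kron (a k) (b k))))"

definition entanglement_breaking :: "(qmat \<Rightarrow> qmat) \<Rightarrow> bool" where
  "entanglement_breaking \<Psi> \<longleftrightarrow> quantum_channel \<Psi> \<and>
     (\<forall>\<rho> :: complex^(2\<times>2)^(2\<times>2). density \<rho> \<longrightarrow> separable (id_tensor \<Psi> \<rho>))"

end

theory Submission
  imports Defs
begin


lemma bessel2:
  fixes x p q :: "'v::real_inner"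
  assumes pq: "inner p q = 0"
  shows "(inner x p)^2 * (inner q q) + (inner x q)^2 * (inner p p) \<le> inner x x * inner p p * inner q q"
proof -
  define P where "P = inner p p"
  define Q where "Q = inner q q"
  define z where "z = (P*Q) *\<^sub>R x - (Q * inner x p) *\<^sub>R p - (P * inner x q) *\<^sub>R q"
  have qp: "inner q p = 0" using pq by (simp add: inner_commute)
  have "inner z z = P*Q*(P*Q*inner x x - Q*(inner x p)^2 - P*(inner x q)^2)"
    unfolding z_def
    by (simp add: inner_diff_left inner_diff_right pq qp inner_commute[of p x] inner_commute[of q x]
         flip: P_def Q_def) (simp add: algebra_simps power2_eq_square)
  moreover have "0 \<le> inner z z" by simp
  moreover have "P \<ge> 0" "Q \<ge> 0" unfolding P_def Q_def by auto
  ultimately have h: "0 \<le> P*Q*(P*Q*inner x x - Q*(inner x p)^2 - P*(inner x q)^2)" by simp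
  show ?thesis
  proof (cases "P = 0 \<or> Q = 0")
    case True
    then show ?thesis
      by (auto simp: P_def Q_def)
  next
    case False
    with \<open>P\<ge>0\<close> \<open>Q\<ge>0\<close> have "P*Q > 0" by auto
    with h have "0 \<le> P*Q*inner x x - Q*(inner x p)^2 - P*(inner x q)^2"
      by (simp add: zero_le_mult_iff)
    then show ?thesis unfolding P_def Q_def by (simp add: algebra_simps)
  qed
qed


lemma lp_step:
  fixes A B W c d K :: real
  assumes "A \<ge> 0" "B \<ge> 0" "W \<ge> 0" "-1 \<le> c" "c \<le> 1" "-1 \<le> d" "d \<le> 1"
    "A*(2-2*d) + B*(2+2*d) \<le> W*(2+2*d)*(2-2*d)"
    "A \<le> W*(2+2*d)" "B \<le> W*(2-2*d)"
    "K \<ge> (1+c)*(1+d)" "K \<ge> (1-c)*(1-d)"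
  shows "(1+c)*A + (1-c)*B \<le> 2*K*W"
proof (cases "d = 1 \<or> d = -1")
  case True
  then show ?thesis
  proof
    assume d: "d = 1"
    then have "B = 0" using assms by auto
    have "(1+c)*A \<le> (1+c)*(4*W)" using assms d by (intro mult_left_mono) auto
    moreover have "(4+4*c)*W \<le> (2*K)*W" using assms d by (intro mult_right_mono) auto
    ultimately show ?thesis using \<open>B = 0\<close> by (simp add: algebra_simps)
  next
    assume d: "d = -1"
    then have "A = 0" using assms by auto
    have "(1-c)*B \<le> (1-c)*(4*W)" using assms d by (intro mult_left_mono) auto
    moreover have "(4-4*c)*W \<le> (2*K)*W" using assms d by (intro mult_right_mono) auto
    ultimately show ?thesis using \<open>A = 0\<close> by (simp add: algebra_simps)
  qed
next
  case False
  then have pos: "(1-d)*(1+d) > 0" using assms by auto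
  have "(1-d)*(1+d)*((1+c)*A + (1-c)*B) = ((1+c)*(1+d))*(A*(1-d)) + ((1-c)*(1-d))*(B*(1+d))"
    by (simp add: algebra_simps)
  also have "\<dots> \<le> K*(A*(1-d)) + K*(B*(1+d))"
    using assms by (intro add_mono mult_right_mono) auto
  also have "\<dots> = K*(A*(2-2*d) + B*(2+2*d))/2" by (simp add: algebra_simps)
  also have "\<dots> \<le> K*(W*(2+2*d)*(2-2*d))/2"
    using assms by (intro divide_right_mono mult_left_mono) (auto intro: order_trans[of 0 "(1+c)*(1+d)"])
  also have "\<dots> = (1-d)*(1+d)*(2*K*W)" by (simp add: field_simps)
  finally show ?thesis using pos by (rule mult_left_le_imp_le)
qed

lemma Lbound:
  fixes u v E F x :: "'v::real_inner"
  assumes "norm u = 1" "norm v = 1" "norm E = 1" "norm F = 1"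
  shows "(norm ((inner x u) *\<^sub>R E + (inner x v) *\<^sub>R F))^2
     \<le> max ((1+inner E F)*(1+inner u v)) ((1-inner E F)*(1-inner u v)) * (norm x)^2"
proof -
  define X where "X = inner x u"
  define Y where "Y = inner x v"
  define c where "c = inner E F"
  define d where "d = inner u v"
  have uu: "inner u u = 1" "inner v v = 1" "inner E E = 1" "inner F F = 1"
    using assms by (simp_all add: dot_square_norm)
  have n: "(norm (X *\<^sub>R E + Y *\<^sub>R F))^2 = ((1+c)*(X+Y)^2 + (1-c)*(X-Y)^2)/2"
    unfolding power2_norm_eq_inner
    by (simp add: inner_add_left inner_add_right uu c_def inner_commute[of F E])
       (simp add: algebra_simps power2_eq_square)
  have pq: "inner (u+v) (u-v) = 0"
    by (simp add: inner_add_left inner_diff_right uu inner_commute[of u v])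
  have pp: "inner (u+v) (u+v) = 2+2*d" and qq: "inner (u-v) (u-v) = 2-2*d"
    by (simp_all add: inner_add_left inner_add_right inner_diff_left inner_diff_right uu d_def inner_commute[of v u])
  have xp: "inner x (u+v) = X+Y" and xq: "inner x (u-v) = X-Y"
    by (simp_all add: X_def Y_def inner_add_right inner_diff_right)
  have bes: "(X+Y)^2*(2-2*d) + (X-Y)^2*(2+2*d) \<le> inner x x * (2+2*d) * (2-2*d)"
    using bessel2[OF pq, of x] unfolding pp qq xp xq .
  have cs1: "(X+Y)^2 \<le> inner x x * (2+2*d)"
  proof -
    have "\<bar>inner x (u+v)\<bar> \<le> norm x * norm (u+v)" by (rule Cauchy_Schwarz_ineq2)
    then have "(inner x (u+v))^2 \<le> (norm x * norm (u+v))^2"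
      by (metis abs_ge_zero power2_abs power_mono)
    then show ?thesis by (simp add: xp power_mult_distrib flip: dot_square_norm pp)
  qed
  have cs2: "(X-Y)^2 \<le> inner x x * (2-2*d)"
  proof -
    have "\<bar>inner x (u-v)\<bar> \<le> norm x * norm (u-v)" by (rule Cauchy_Schwarz_ineq2)
    then have "(inner x (u-v))^2 \<le> (norm x * norm (u-v))^2"
      by (metis abs_ge_zero power2_abs power_mono)
    then show ?thesis by (simp add: xq power_mult_distrib flip: dot_square_norm qq)
  qed
  have cb: "-1 \<le> c" "c \<le> 1" "-1 \<le> d" "d \<le> 1"
    unfolding c_def d_def using assms Cauchy_Schwarz_ineq2[of E F] Cauchy_Schwarz_ineq2[of u v]
    by (simp_all add: abs_le_iff)
  have "((1+c)*(X+Y)^2 + (1-c)*(X-Y)^2) \<le> 2 * max ((1+c)*(1+d)) ((1-c)*(1-d)) * inner x x"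
    by (rule lp_step) (use bes cs1 cs2 cb in auto)
  then show ?thesis
    using n by (simp add: X_def Y_def c_def d_def dot_square_norm)
qed


lemma perk:
  fixes h z :: "'v::real_inner" and m :: real
  assumes "norm z \<le> m"
  shows "norm (h+z) \<le> sqrt ((norm h)^2 + m^2) + inner h z / sqrt ((norm h)^2 + m^2)"
proof -
  define l where "l = sqrt ((norm h)^2 + m^2)"
  have m0: "m \<ge> 0" using assms norm_ge_zero order_trans by blast
  show ?thesis
  proof (cases "l = 0")
    case True
    then have "norm h = 0" "m = 0" unfolding l_def by (simp_all add: add_nonneg_eq_0_iff)
    then show ?thesis using assms by simp
  next
    case False
    have "l \<ge> 0" unfolding l_def by simp
    with False have lpos: "l > 0" by linarith
    have l2: "l^2 = (norm h)^2 + m^2" unfolding l_def by simp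
    have hz: "\<bar>inner h z\<bar> \<le> norm h * m"
      using Cauchy_Schwarz_ineq2[of h z] assms by (meson mult_left_mono norm_ge_zero order_trans)
    have "2*(norm h * m) \<le> l^2" using sum_squares_bound[of "norm h" m] by (simp add: l2 mult.assoc)
    moreover have "0 \<le> norm h * m" using m0 by simp
    ultimately have "norm h*m \<le> l^2" by linarith
    then have num: "0 \<le> l^2 + inner h z" using hz by (simp add: abs_le_iff)
    have "l + inner h z / l = (l^2 + inner h z)/l" using lpos by (simp add: field_simps power2_eq_square)
    then have rhs0: "0 \<le> l + inner h z / l" using num lpos by simp
    have "(norm (h+z))^2 = (norm h)^2 + 2 * inner h z + (norm z)^2"
      by (simp add: power2_norm_eq_inner inner_add_left inner_add_right inner_commute[of z h])
    also have "\<dots> \<le> (norm h)^2 + 2 * inner h z + m^2"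
      using assms by (simp add: power_mono)
    also have "\<dots> \<le> (l + inner h z / l)^2"
      using lpos by (simp add: power2_sum l2 power_divide) 
    finally show ?thesis using rhs0 unfolding l_def[symmetric]
      by (rule power2_le_imp_le)
  qed
qed


lemma max_sq:
  fixes s t :: real
  assumes "0 \<le> s" "0 \<le> t"
  shows "(max s t)^2 = max (s^2) (t^2)"
  using assms by (cases "s \<le> t") (auto simp: max_def power_mono intro: antisym power_mono)

lemma core:
  fixes u v E F :: "'v::real_inner" and x y :: "nat \<Rightarrow> 'v" and p :: "nat \<Rightarrow> real" and a b :: real
  assumes nu: "norm u = 1" and nv: "norm v = 1" and nE: "norm E = 1" and nF: "norm F = 1"
    and kk: "\<forall>k<K. 0 \<le> p k \<and> norm (x k) \<le> 1/2 \<and> norm (y k) \<le> 1/2"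
    and sp: "(\<Sum>k<K. p k) = 1" and sx: "(\<Sum>k<K. p k *\<^sub>R x k) = 0"
    and uv: "inner u v = 2*a^2-1" and EF: "inner E F = 2*b^2-1" and a0: "0 \<le> a" and b0: "0 \<le> b"
  shows "(\<Sum>k<K. p k * ((1/2 + inner (x k) u) * (1/2 + inner (y k) E)
              + (1/2 + inner (x k) v) * (1/2 + inner (y k) F)))
     \<le> 1/2 * (1 + sqrt (b^2 + (max (a*b) (sqrt ((1-a^2)*(1-b^2))))^2))"
proof -
  define m where "m = max (a*b) (sqrt ((1-a^2)*(1-b^2)))"
  have "inner u v \<le> 1" using Cauchy_Schwarz_ineq2[of u v] nu nv by (simp add: abs_le_iff)
  then have a1: "a^2 \<le> 1" using uv by simp
  have "inner E F \<le> 1" using Cauchy_Schwarz_ineq2[of E F] nE nF by (simp add: abs_le_iff)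
  then have b1: "b^2 \<le> 1" using EF by simp
  have m0: "0 \<le> m" unfolding m_def using a0 b0 by (simp add: le_max_iff_disj)
  have m2: "4 * m^2 = max ((1+inner E F)*(1+inner u v)) ((1-inner E F)*(1-inner u v))"
  proof -
    have "m^2 = max ((a*b)^2) ((1-a^2)*(1-b^2))"
      unfolding m_def using a0 b0 a1 b1 by (subst max_sq) auto
    then show ?thesis unfolding uv EF
      by (simp add: max_def power_mult_distrib algebra_simps)
  qed
  define h where "h = (1/2) *\<^sub>R (E+F)"
  have hh: "(norm h)^2 = b^2"
  proof -
    have "inner h h = (1/4)*(inner E E + 2*inner E F + inner F F)"
      unfolding h_def by (simp add: inner_add_left inner_add_right inner_commute[of F E]) (simp add: field_simps)
    also have "\<dots> = b^2" using nE nF EF by (simp add: dot_square_norm)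
    finally show ?thesis by (simp add: power2_norm_eq_inner)
  qed
  define l where "l = sqrt (b^2 + m^2)"
  define z where "z = (\<lambda>k. inner (x k) u *\<^sub>R E + inner (x k) v *\<^sub>R F)"
  define w0 where "w0 = inner h E *\<^sub>R u + inner h F *\<^sub>R v"
  define wv where "wv = (1/2) *\<^sub>R (u+v) + (1/(2*l)) *\<^sub>R w0"
  have hz: "inner h (z k) = inner (x k) w0" for k
    unfolding z_def w0_def by (simp add: inner_add_right inner_add_left algebra_simps inner_commute)
  have bound: "(1/2 + inner (x k) u) * (1/2 + inner (y k) E) + (1/2 + inner (x k) v) * (1/2 + inner (y k) F)
      \<le> (1/2 + l/2) + inner (x k) wv" if "k < K" for k
  proof -
    have nx: "norm (x k) \<le> 1/2" and ny: "norm (y k) \<le> 1/2" using kk that by auto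
    have "(norm (z k))^2 \<le> 4 * m^2 * (norm (x k))^2"
      unfolding z_def m2 by (rule Lbound[OF nu nv nE nF])
    also have "\<dots> \<le> 4 * m^2 * (1/2)^2"
      using nx by (intro mult_left_mono power_mono) auto
    also have "\<dots> = m^2" by (simp add: power2_eq_square)
    finally have nz: "norm (z k) \<le> m" using m0 by (rule power2_le_imp_le)
    have pk: "norm (h + z k) \<le> l + inner h (z k) / l"
      using perk[OF nz, of h] unfolding hh l_def .
    have eq: "(1/2 + inner (x k) u) * (1/2 + inner (y k) E) + (1/2 + inner (x k) v) * (1/2 + inner (y k) F)
       = 1/2 + inner (x k) ((1/2) *\<^sub>R (u+v)) + inner (y k) (h + z k)"
      unfolding h_def z_def by (simp add: inner_add_right algebra_simps)
    have "inner (y k) (h + z k) \<le> norm (y k) * norm (h + z k)" by (rule norm_cauchy_schwarz)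
    also have "\<dots> \<le> 1/2 * (l + inner h (z k) / l)"
      using ny pk by (intro mult_mono) auto
    finally have "inner (y k) (h + z k) \<le> l/2 + inner (x k) ((1/(2*l)) *\<^sub>R w0)"
      by (simp add: hz algebra_simps)
    then show ?thesis unfolding eq wv_def by (simp add: inner_add_right)
  qed
  have "(\<Sum>k<K. p k * ((1/2 + inner (x k) u) * (1/2 + inner (y k) E)
              + (1/2 + inner (x k) v) * (1/2 + inner (y k) F)))
     \<le> (\<Sum>k<K. p k * ((1/2 + l/2) + inner (x k) wv))"
    using bound kk by (intro sum_mono mult_left_mono) auto
  also have "\<dots> = (\<Sum>k<K. p k) * (1/2 + l/2) + inner (\<Sum>k<K. p k *\<^sub>R x k) wv"
    by (simp add: distrib_left sum.distrib sum_distrib_right inner_sum_left sum_divide_distrib)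
  also have "\<dots> = 1/2 * (1 + l)" using sp sx by simp
  finally show ?thesis unfolding l_def m_def .
qed



lemma two_ne: "(1::2) \<noteq> 2" by simp

lemma sum_22: "sum f (UNIV::(2\<times>2) set) = f (1,1) + f (1,2) + f (2,1) + f (2,2)"
proof -
  have "sum f (UNIV::(2\<times>2) set) = sum f ((UNIV::2 set) \<times> (UNIV::2 set))" by simp
  also have "\<dots> = (\<Sum>x\<in>UNIV. \<Sum>y\<in>UNIV. f (x,y))" by (rule sum.cartesian_product')
  finally show ?thesis by (simp add: sum_2 add.assoc)
qed

lemma cinner2: "cinner (u::complex^2) w = cnj (u$1) * w$1 + cnj (u$2) * w$2"
  by (simp add: cinner_def sum_2)

lemma qf2: "cinner (x::complex^2) ((A::qmat) *v x) = cnj (x$1) * (A$1$1 * x$1 + A$1$2 * x$2) + cnj (x$2) * (A$2$1 * x$1 + A$2$2 * x$2)"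
  by (simp add: cinner2 matrix_vector_mult_def sum_2)

lemma ctrace2: "ctrace (A::qmat) = A$1$1 + A$2$2"
  by (simp add: ctrace_def sum_2)

lemma norm2: "norm (x::complex^2) = 1 \<Longrightarrow> (cmod (x$1))^2 + (cmod (x$2))^2 = 1"
  by (simp add: norm_vec_def L2_set_def sum_2)

definition herm2 :: "qmat \<Rightarrow> bool" where
  "herm2 A \<longleftrightarrow> Im (A$1$1) = 0 \<and> Im (A$2$2) = 0 \<and> A$2$1 = cnj (A$1$2)"

lemma qf_herm:
  assumes "herm2 A"
  shows "cinner x (A *v x) = complex_of_real (Re (A$1$1) * (cmod (x$1))^2 + Re (A$2$2) * (cmod (x$2))^2
            + 2 * Re (cnj (x$1) * A$1$2 * x$2))"
  using assms unfolding herm2_def qf2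
  by (simp add: complex_eq_iff cmod_power2) (simp add: algebra_simps power2_eq_square)

lemma psd_herm:
  assumes "psd A"
  shows "herm2 A"
proof -
  have P: "Im (cinner v (A *v v)) = 0" for v
    using assms unfolding psd_def by (simp add: complex_is_Real_iff)
  have 1: "Im (A$1$1) = 0" using P[of "vector [1,0]"] by (simp add: qf2)
  have 2: "Im (A$2$2) = 0" using P[of "vector [0,1]"] by (simp add: qf2)
  have 3: "Im (A$1$2) + Im (A$2$1) = 0" using P[of "vector [1,1]"] 1 2 by (simp add: qf2)
  have 4: "Re (A$1$2) - Re (A$2$1) = 0" using P[of "vector [1,\<i>]"] 1 2 by (simp add: qf2)
  show ?thesis unfolding herm2_def using 1 2 3 4 by (simp add: complex_eq_iff)
qed


definition bl :: "complex^2 \<Rightarrow> real \<times> real \<times> real" where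
  "bl x = (2 * Re (cnj (x$1) * x$2), - 2 * Im (cnj (x$1) * x$2), (cmod (x$1))^2 - (cmod (x$2))^2)"

definition bw :: "qmat \<Rightarrow> real \<times> real \<times> real" where
  "bw A = (Re (A$1$2), Im (A$1$2), (Re (A$1$1) - Re (A$2$2))/2)"

lemma qf_bloch:
  assumes "herm2 A"
  shows "cinner x (A *v x) = complex_of_real ((Re (A$1$1) + Re (A$2$2))/2 * ((cmod (x$1))^2 + (cmod (x$2))^2)
           + inner (bw A) (bl x))"
  unfolding qf_herm[OF assms] bl_def bw_def
  by (simp add: algebra_simps) (simp add: field_simps)

lemma bl_inner: "inner (bl x) (bl y) = 2 * (cmod (cinner x y))^2 - ((cmod (x$1))^2 + (cmod (x$2))^2) * ((cmod (y$1))^2 + (cmod (y$2))^2)"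
  unfolding bl_def cinner2
  by (simp add: cmod_power2) (simp add: power2_eq_square algebra_simps)

lemma norm3: "(norm (x::real, y::real, z::real))^2 = x^2 + y^2 + z^2"
  by (simp add: norm_Pair)

lemma psd_bw:
  assumes "psd A"
  shows "norm (bw A) \<le> (Re (A$1$1) + Re (A$2$2))/2"
proof -
  have H: "herm2 A" by (rule psd_herm[OF assms])
  define r1 where "r1 = Re (A$1$1)"
  define r2 where "r2 = Re (A$2$2)"
  define q where "q = A$1$2"
  have R: "Re (cinner v (A *v v)) = r1 * (cmod (v$1))^2 + r2 * (cmod (v$2))^2 + 2 * Re (cnj (v$1) * q * v$2)" for v
    unfolding qf_herm[OF H] r1_def r2_def q_def by simp
  have P: "0 \<le> Re (cinner v (A *v v))" for v using assms unfolding psd_def by simp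
  have r1: "0 \<le> r1" using P[of "vector [1,0]"] unfolding R by simp
  have r2: "0 \<le> r2" using P[of "vector [0,1]"] unfolding R by simp
  have qq: "cnj q * q = complex_of_real ((cmod q)^2)" using complex_norm_square[of q] by (simp add: mult.commute)
  have cq: "cmod q * cmod q = Re q * Re q + Im q * Im q" using cmod_power2[of q] by (simp add: power2_eq_square)
  have qq': "q * cnj q = complex_of_real ((cmod q)^2)" using complex_norm_square[of q] by (simp add: mult.commute)
  have v1: "0 \<le> r1*r2^2 - r2*(cmod q)^2"
    using P[of "vector [complex_of_real r2, - cnj q]"] unfolding R
    by (simp add: algebra_simps qq qq' power2_eq_square cq)
  have v2: "0 \<le> r2*r1^2 - r1*(cmod q)^2"
    using P[of "vector [- q, complex_of_real r1]"] unfolding R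
    by (simp add: algebra_simps qq qq' power2_eq_square cq)
  have v3: "0 \<le> r1 + r2*(cmod q)^2 - 2*(cmod q)^2"
    using P[of "vector [1, - cnj q]"] unfolding R
    by (simp add: algebra_simps qq qq' power2_eq_square cq)
  have key: "(cmod q)^2 \<le> r1*r2"
  proof (cases "r2 > 0")
    case True
    then show ?thesis using v1 by (simp add: power2_eq_square algebra_simps)
  next
    case False
    then have "r2 = 0" using r2 by simp
    show ?thesis
    proof (cases "r1 > 0")
      case True
      then show ?thesis using v2 \<open>r2 = 0\<close> by (simp add: power2_eq_square algebra_simps)
        (smt (verit) mult_le_0_iff zero_le_square)
    next
      case False
      then show ?thesis using v3 r1 \<open>r2 = 0\<close> by simp
    qed
  qed
  have "(norm (bw A))^2 = (cmod q)^2 + ((r1 - r2)/2)^2"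
    unfolding bw_def q_def r1_def r2_def by (simp add: norm3 cmod_power2)
  also have "\<dots> \<le> ((r1+r2)/2)^2" using key by (simp add: power2_eq_square field_simps)
  finally have "(norm (bw A))^2 \<le> ((r1+r2)/2)^2" .
  moreover have "0 \<le> (r1+r2)/2" using r1 r2 by simp
  ultimately show ?thesis unfolding r1_def r2_def by (rule power2_le_imp_le)
qed



definition rho0 :: "complex^(2\<times>2)^(2\<times>2)" where
  "rho0 = (\<chi> r c. if fst r = snd r \<and> fst c = snd c then 1/2 else 0)"

definition Bm :: "2 \<Rightarrow> 2 \<Rightarrow> qmat" where
  "Bm i i' = (\<chi> j l. rho0 $ (i,j) $ (i',l))"

lemma Bm_entry: "Bm i i' $ j $ l = (if i = j \<and> i' = l then 1/2 else 0)"
  by (simp add: Bm_def rho0_def)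

lemma rho0_density: "density rho0"
proof -
  have q: "cinner v (rho0 *v v) = complex_of_real ((cmod (v$(1,1) + v$(2,2)))^2 / 2)" for v
  proof -
    have "cinner v (rho0 *v v) = cnj (v$(1,1) + v$(2,2)) * (v$(1,1) + v$(2,2)) / 2"
      by (simp add: cinner_def matrix_vector_mult_def sum_22 rho0_def algebra_simps add_divide_distrib)
    also have "\<dots> = complex_of_real ((cmod (v$(1,1) + v$(2,2)))^2 / 2)"
      using complex_norm_square[of "v$(1,1) + v$(2,2)"] by (simp add: mult.commute)
    finally show ?thesis .
  qed
  have "psd rho0" unfolding psd_def q by simp
  moreover have "ctrace rho0 = 1" by (simp add: ctrace_def sum_22 rho0_def)
  ultimately show ?thesis unfolding density_def by simp
qed

lemma decomp: "X = cscale (2*X$1$1) (Bm 1 1) + cscale (2*X$1$2) (Bm 1 2) + cscale (2*X$2$1) (Bm 2 1) + cscale (2*X$2$2) (Bm 2 2)"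
  by (simp add: vec_eq_iff forall_2 cscale_def Bm_entry)

lemma qf_sum:
  fixes x :: "complex^2" and B :: "nat \<Rightarrow> qmat"
  shows "cinner x ((\<Sum>k\<in>S. cscale (c k) (B k)) *v x) = (\<Sum>k\<in>S. c k * cinner x (B k *v x))"
  unfolding qf2 by (simp add: cscale_def sum_distrib_left sum_distrib_right sum.distrib algebra_simps)


definition cv :: "complex^2 \<Rightarrow> complex^2" where
  "cv x = (\<chi> i. cnj (x$i))"

lemma density_facts:
  assumes "density A"
  shows "herm2 A" "Re (A$1$1) + Re (A$2$2) = 1" "norm (bw A) \<le> 1/2"
proof -
  show H: "herm2 A" using assms psd_herm unfolding density_def by blast
  have "ctrace A = 1" using assms unfolding density_def by simp
  then show t: "Re (A$1$1) + Re (A$2$2) = 1" unfolding ctrace2 by (metis one_complex.simps(1) plus_complex.simps(1))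
  show "norm (bw A) \<le> 1/2" using psd_bw[of A] assms t unfolding density_def by simp
qed

lemma qf_density:
  assumes "density A" "(cmod (x$1))^2 + (cmod (x$2))^2 = 1"
  shows "cinner x (A *v x) = complex_of_real (1/2 + inner (bw A) (bl x))"
  using qf_bloch[OF density_facts(1)[OF assms(1)], of x] density_facts(2)[OF assms(1)] assms(2) by simp

lemma bl_norm:
  assumes "(cmod (x$1))^2 + (cmod (x$2))^2 = 1"
  shows "norm (bl x) = 1"
proof -
  have "cinner x x = complex_of_real ((cmod (x$1))^2 + (cmod (x$2))^2)"
    unfolding cinner2 using complex_norm_square[of "x$1"] complex_norm_square[of "x$2"]
    by (simp add: mult.commute)
  then have "cmod (cinner x x) = 1" using assms by simp
  then have "inner (bl x) (bl x) = 1" unfolding bl_inner assms by simp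
  then show ?thesis by (simp add: norm_eq_sqrt_inner)
qed

lemma cv_facts:
  "cmod ((cv x)$1) = cmod (x$1)" "cmod ((cv x)$2) = cmod (x$2)" "cinner (cv x) (cv y) = cnj (cinner x y)"
  by (simp_all add: cv_def cinner2)

theorem corollary4:
  fixes \<psi> \<phi> e f :: "complex^2"
  assumes "norm \<psi> = 1" "norm \<phi> = 1" "norm e = 1" "norm f = 1"
  shows "\<forall>\<Psi>. entanglement_breaking \<Psi> \<longrightarrow>
    Re (1/2 * cinner e (\<Psi> (proj \<psi>) *v e) + 1/2 * cinner f (\<Psi> (proj \<phi>) *v f))
    \<le> 1/2 * (1 + sqrt ((cmod (cinner e f))\<^sup>2 +
          (max (cmod (cinner \<psi> \<phi>) * cmod (cinner e f))
               (sqrt ((1 - (cmod (cinner \<psi> \<phi>))\<^sup>2) * (1 - (cmod (cinner e f))\<^sup>2))))\<^sup>2))"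
proof (intro allI impI)
  fix \<Psi> assume EB: "entanglement_breaking \<Psi>"
  then have QC: "quantum_channel \<Psi>" unfolding entanglement_breaking_def by simp
  have add: "\<And>A B. \<Psi> (A + B) = \<Psi> A + \<Psi> B" and hom: "\<And>c A. \<Psi> (cscale c A) = cscale c (\<Psi> A)"
    using QC unfolding quantum_channel_def complex_linear_def by auto
  have tp: "\<And>A. ctrace (\<Psi> A) = ctrace A"
    using QC unfolding quantum_channel_def trace_preserving_def by auto
  have "separable (id_tensor \<Psi> rho0)" using EB rho0_density unfolding entanglement_breaking_def by blast
  then obtain K p a b where H: "(\<forall>k<(K::nat). 0 \<le> (p::nat\<Rightarrow>real) k \<and> density ((a::nat\<Rightarrow>qmat) k) \<and> density ((b::nat\<Rightarrow>qmat) k)) \<and> (\<Sum>k<K. p k) = 1 \<and>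
      id_tensor \<Psi> rho0 = (\<Sum>k<K. cscale (complex_of_real (p k)) (kron (a k) (b k)))"
    unfolding separable_def apply (elim exE) subgoal premises prems for K p a b by (rule prems(1)[OF prems(2)]) done
  then have kk: "\<forall>k<K. 0 \<le> p k \<and> density (a k) \<and> density (b k)"
    and sp: "(\<Sum>k<K. p k) = 1"
    and rep: "id_tensor \<Psi> rho0 = (\<Sum>k<K. cscale (complex_of_real (p k)) (kron (a k) (b k)))"
    by (rule conjunct1, rule conjunct1[OF conjunct2], rule conjunct2[OF conjunct2])
  have ent: "\<Psi> (Bm i i') $ j $ l = (\<Sum>k<K. complex_of_real (p k) * (a k $ i $ i' * b k $ j $ l))" for i i' j l
  proof -
    have "\<Psi> (Bm i i') $ j $ l = id_tensor \<Psi> rho0 $ (i,j) $ (i',l)"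
      by (simp add: id_tensor_def Bm_def)
    also have "\<dots> = (\<Sum>k<K. complex_of_real (p k) * (a k $ i $ i' * b k $ j $ l))"
      unfolding rep by (simp add: cscale_def kron_def)
    finally show ?thesis .
  qed
  define Sx where "Sx k (X::qmat) = X$1$1 * a k$1$1 + X$1$2 * a k$1$2 + X$2$1 * a k$2$1 + X$2$2 * a k$2$2" for k X
  have PsiX: "\<Psi> X = (\<Sum>k<K. cscale (2 * complex_of_real (p k) * Sx k X) (b k))" for X
  proof -
    have "\<Psi> X = cscale (2*X$1$1) (\<Psi> (Bm 1 1)) + cscale (2*X$1$2) (\<Psi> (Bm 1 2))
        + cscale (2*X$2$1) (\<Psi> (Bm 2 1)) + cscale (2*X$2$2) (\<Psi> (Bm 2 2))"
      by (subst decomp[of X]) (simp only: add hom)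
    then show ?thesis
      by (simp add: vec_eq_iff cscale_def ent Sx_def sum_distrib_left sum.distrib algebra_simps)
  qed
  have tr: "(\<Sum>k<K. complex_of_real (p k) * a k $ i $ i') = ctrace (Bm i i')" for i i'
  proof -
    have "ctrace (Bm i i') = ctrace (\<Psi> (Bm i i'))" by (simp add: tp)
    also have "\<dots> = (\<Sum>k<K. complex_of_real (p k) * a k $ i $ i' * ctrace (b k))"
      unfolding ctrace2 ent by (simp add: ctrace2 sum.distrib[symmetric] algebra_simps)
    also have "\<dots> = (\<Sum>k<K. complex_of_real (p k) * a k $ i $ i')"
      using kk unfolding density_def by (intro sum.cong) auto
    finally show ?thesis by simp
  qed
  have t11: "(\<Sum>k<K. complex_of_real (p k) * a k $ 1 $ 1) = 1/2"
    using tr[of 1 1] by (simp add: ctrace2 Bm_entry)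
  have t22: "(\<Sum>k<K. complex_of_real (p k) * a k $ 2 $ 2) = 1/2"
    using tr[of 2 2] by (simp add: ctrace2 Bm_entry)
  have t12: "(\<Sum>k<K. complex_of_real (p k) * a k $ 1 $ 2) = 0"
    using tr[of 1 2] by (simp add: ctrace2 Bm_entry)
  have sx: "(\<Sum>k<K. p k *\<^sub>R bw (a k)) = 0"
  proof -
    have r12: "(\<Sum>k<K. p k * Re (a k $ 1 $ 2)) = 0" using arg_cong[OF t12, of Re] by (simp add: Re_sum)
    have i12: "(\<Sum>k<K. p k * Im (a k $ 1 $ 2)) = 0" using arg_cong[OF t12, of Im] by (simp add: Im_sum)
    have r11: "(\<Sum>k<K. p k * Re (a k $ 1 $ 1)) = 1/2" using arg_cong[OF t11, of Re] by (simp add: Re_sum)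
    have r22: "(\<Sum>k<K. p k * Re (a k $ 2 $ 2)) = 1/2" using arg_cong[OF t22, of Re] by (simp add: Re_sum)
    have "(\<Sum>k<K. p k * ((Re (a k $ 1 $ 1) - Re (a k $ 2 $ 2)) / 2)) = 0"
      using r11 r22 by (simp add: right_diff_distrib sum_subtractf sum_divide_distrib[symmetric] times_divide_eq_right)
    then show ?thesis using r12 i12 unfolding bw_def by (simp add: prod_eq_iff fst_sum snd_sum o_def)
  qed
  have nps: "(cmod (\<psi>$1))^2 + (cmod (\<psi>$2))^2 = 1" using assms(1) by (rule norm2)
  have nph: "(cmod (\<phi>$1))^2 + (cmod (\<phi>$2))^2 = 1" using assms(2) by (rule norm2)
  have ne: "(cmod (e$1))^2 + (cmod (e$2))^2 = 1" using assms(3) by (rule norm2)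
  have nf: "(cmod (f$1))^2 + (cmod (f$2))^2 = 1" using assms(4) by (rule norm2)
  have Sproj: "Sx k (proj x) = cinner (cv x) (a k *v cv x)" for k x
    unfolding Sx_def qf2 by (simp add: proj_def cv_def algebra_simps)
  have obj: "Re (cinner g (\<Psi> (proj x) *v g)) = (\<Sum>k<K. 2 * p k * ((1/2 + inner (bw (a k)) (bl (cv x))) * (1/2 + inner (bw (b k)) (bl g))))"
    if nx: "(cmod (x$1))^2 + (cmod (x$2))^2 = 1" and ng: "(cmod (g$1))^2 + (cmod (g$2))^2 = 1" for x g
  proof -
    have ncv: "(cmod ((cv x)$1))^2 + (cmod ((cv x)$2))^2 = 1" using nx by (simp add: cv_facts)
    have "cinner g (\<Psi> (proj x) *v g) = (\<Sum>k<K. 2 * complex_of_real (p k) * Sx k (proj x) * cinner g (b k *v g))"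
      unfolding PsiX qf_sum ..
    also have "\<dots> = (\<Sum>k<K. complex_of_real (2 * p k * ((1/2 + inner (bw (a k)) (bl (cv x))) * (1/2 + inner (bw (b k)) (bl g)))))"
      using kk by (intro sum.cong) (auto simp: Sproj qf_density ncv ng)
    finally show ?thesis by (simp add: Re_sum)
  qed
  have uv: "inner (bl (cv \<psi>)) (bl (cv \<phi>)) = 2 * (cmod (cinner \<psi> \<phi>))^2 - 1"
    unfolding bl_inner by (simp add: cv_facts nps nph)
  have EF: "inner (bl e) (bl f) = 2 * (cmod (cinner e f))^2 - 1"
    unfolding bl_inner by (simp add: ne nf)
  have C: "(\<Sum>k<K. p k * ((1/2 + inner (bw (a k)) (bl (cv \<psi>))) * (1/2 + inner (bw (b k)) (bl e))
              + (1/2 + inner (bw (a k)) (bl (cv \<phi>))) * (1/2 + inner (bw (b k)) (bl f))))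
     \<le> 1/2 * (1 + sqrt ((cmod (cinner e f))^2 + (max (cmod (cinner \<psi> \<phi>) * cmod (cinner e f))
              (sqrt ((1-(cmod (cinner \<psi> \<phi>))^2)*(1-(cmod (cinner e f))^2))))^2))"
    by (rule core[OF bl_norm bl_norm bl_norm bl_norm _ sp sx uv EF])
       (use kk density_facts(3) nps nph ne nf in \<open>auto simp: cv_facts\<close>)
  have "Re (1/2 * cinner e (\<Psi> (proj \<psi>) *v e) + 1/2 * cinner f (\<Psi> (proj \<phi>) *v f))
      = 1/2 * Re (cinner e (\<Psi> (proj \<psi>) *v e)) + 1/2 * Re (cinner f (\<Psi> (proj \<phi>) *v f))"
    by simp
  also have "\<dots> = (\<Sum>k<K. p k * ((1/2 + inner (bw (a k)) (bl (cv \<psi>))) * (1/2 + inner (bw (b k)) (bl e))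
              + (1/2 + inner (bw (a k)) (bl (cv \<phi>))) * (1/2 + inner (bw (b k)) (bl f))))"
    unfolding obj[OF nps ne] obj[OF nph nf]
    by (simp add: sum_distrib_left sum.distrib[symmetric] algebra_simps)
  finally show "Re (1/2 * cinner e (\<Psi> (proj \<psi>) *v e) + 1/2 * cinner f (\<Psi> (proj \<phi>) *v f))
    \<le> 1/2 * (1 + sqrt ((cmod (cinner e f))\<^sup>2 +
          (max (cmod (cinner \<psi> \<phi>) * cmod (cinner e f))
               (sqrt ((1 - (cmod (cinner \<psi> \<phi>))\<^sup>2) * (1 - (cmod (cinner e f))\<^sup>2))))\<^sup>2))"
    using C by simp
qed

end
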